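(* Let $\nu\ge2$ and $2\le n,m\le\nu$ be integers. Let $A(\nu;n,m)$ be the matrix with $m-1$ rows and $n+m-2$ columns whose $i$-th row ($1\le i\le m-1$) has the entries $\nu-n+1,\nu-n+2,\ldots,\nu$ in columns $i,i+1,\ldots,i+n-1$ respectively, and $0$ in all other columns; define $A(\nu;m,n)$ analogously with the roles of $n$ and $m$ exchanged (so it has $n-1$ rows and $n+m-2$ columns). Let $X(\nu;n,m)$ be the $(n+m-2)\times(n+m-2)$ matrix obtained by placing $A(\nu;n,m)$ on top of $A(\nu;m,n)$. If one marks $n+m-2$ nonzero entries of $X(\nu;n,m)$ such that each row and each column contains exactly one marked entry, then the sum of the marked entries equals $$(\nu-n+1)(m-1)+\nu(n-1).$$ *)

theory Defs
  imports "HOL-Combinatorics.Permutations"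
begin

text \<open>Matrices are indexed from 0. A(nu;n,m): rows i < m-1, columns j < n+m-2;
  row i has entry nu-n+1+k in column i+k for k = 0..n-1, zero elsewhere.\<close>
definition Amat :: "nat \<Rightarrow> nat \<Rightarrow> nat \<Rightarrow> nat \<Rightarrow> nat \<Rightarrow> int" where
  "Amat nu n m i j =
     (if i < m - 1 \<and> j < n + m - 2 \<and> i \<le> j \<and> j < i + n
      then int nu - int n + 1 + int (j - i) else 0)"

definition Xmat :: "nat \<Rightarrow> nat \<Rightarrow> nat \<Rightarrow> nat \<Rightarrow> nat \<Rightarrow> int" where
  "Xmat nu n m i j =
     (if i < m - 1 then Amat nu n m i j else Amat nu m n (i - (m - 1)) j)"

end

theory Submission
  imports Defs
begin

theorem lemma2p30:
  fixes nu n m :: nat and \<sigma> :: "nat \<Rightarrow> nat"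
  assumes "nu \<ge> 2" and "2 \<le> n" and "n \<le> nu" and "2 \<le> m" and "m \<le> nu"
    and "\<sigma> permutes {..<n + m - 2}"
    and "\<forall>i < n + m - 2. Xmat nu n m i (\<sigma> i) \<noteq> 0"
  shows "(\<Sum>i<n + m - 2. Xmat nu n m i (\<sigma> i))
           = (int nu - int n + 1) * (int m - 1) + int nu * (int n - 1)"
proof -
  define N where "N = n + m - 2"
  define c where "c i = (if i < m - 1 then int nu - int n + 1 else int nu)" for i
  have pt: "Xmat nu n m i (\<sigma> i) = c i + int (\<sigma> i) - int i" if "i < N" for i
  proof -
    have nz: "Xmat nu n m i (\<sigma> i) \<noteq> 0" using assms(7) that N_def by auto
    show ?thesis
    proof (cases "i < m - 1")
      case True
      then have "Amat nu n m i (\<sigma> i) \<noteq> 0" using nz by (simp add: Xmat_def)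
      then have "i \<le> \<sigma> i" by (simp add: Amat_def split: if_splits)
      then show ?thesis using True nz by (simp add: Xmat_def Amat_def c_def of_nat_diff split: if_splits)
    next
      case False
      then have "Amat nu m n (i - (m - 1)) (\<sigma> i) \<noteq> 0" using nz by (simp add: Xmat_def)
      then have "i - (m - 1) \<le> \<sigma> i" by (simp add: Amat_def split: if_splits)
      then show ?thesis using False nz assms(4)
        by (simp add: Xmat_def Amat_def c_def of_nat_diff split: if_splits)
    qed
  qed
  have "(\<Sum>i<N. Xmat nu n m i (\<sigma> i)) = (\<Sum>i<N. c i + int (\<sigma> i) - int i)"
    using pt by simp
  also have "\<dots> = (\<Sum>i<N. c i) + (\<Sum>i<N. int (\<sigma> i)) - (\<Sum>i<N. int i)"
    by (simp add: sum.distrib sum_subtractf)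
  also have "(\<Sum>i<N. int (\<sigma> i)) = (\<Sum>i<N. int i)"
    using sum.permute[OF assms(6), of int] N_def by (simp add: comp_def)
  also have "(\<Sum>i<N. c i) = (\<Sum>i<m-1. c i) + (\<Sum>i\<in>{m-1..<N}. c i)"
    using assms(2,4) N_def by (metis add_le_cancel_right diff_add_inverse2 diff_le_mono le_add2 one_add_one sum.atLeastLessThan_concat lessThan_atLeast0 le0 Nat.add_diff_assoc2 add_leD1)
  also have "(\<Sum>i<m-1. c i) = int (m-1) * (int nu - int n + 1)"
    by (simp add: c_def)
  also have "(\<Sum>i\<in>{m-1..<N}. c i) = int (N - (m-1)) * int nu"
    by (simp add: c_def)
  finally show ?thesis using assms(2,4) N_def by (simp add: of_nat_diff algebra_simps)
qed

end
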